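(* Let $\mathsf S,\mathsf T$ be trees. Every morphism of polynomial endofunctors $\overline{\mathsf S}\to\overline{\mathsf T}$ is a morphism of monads. Equivalently, the forgetful functor $\mathbf{Tree}\to\mathbf{PolyEnd}$ is full.
   Context: A polynomial endofunctor is a diagram of sets $P_0\xleftarrow{s}P_2\xrightarrow{p}P_1\xrightarrow{t}P_0$ with $p$ having finite fibres; a morphism (in $\mathbf{PolyEnd}$) is a triple of maps commuting with $s,p,t$ whose middle square is a pullback. A tree is a polynomial endofunctor with all sets finite, $t$ injective, $s$ injective with singleton complement (the root), and such that iterating $\sigma$ ($\sigma(\mathrm{root})=\mathrm{root}$, $\sigma(e)=t(p(e))$ for $e\in T_2$) brings every edge to the root. A subtree of $\mathsf T$ is a tree with a morphism into $\mathsf T$ whose components are inclusions. For a tree $\mathsf T$, $\overline{\mathsf T}$ is the polynomial monad $T_0\leftarrow\mathrm{sub}'(\mathsf T)\to\mathrm{sub}(\mathsf T)\to T_0$, where $\mathrm{sub}(\mathsf T)$ is the set of subtrees, $\mathrm{sub}'(\mathsf T)$ the set of subtrees with a marked leaf, the maps return the marked leaf, forget the mark, and return the root; multiplication is grafting of subtrees and the unit sends an edge to the trivial subtree on it (this is the free monad on $\mathsf T$). $\mathbf{Tree}$ is the category whose objects are trees and whose morphisms $\mathsf S\to\mathsf T$ are monad morphisms $\overline{\mathsf S}\to\overline{\mathsf T}$ (morphisms of polynomial endofunctors respecting the monad structures). *)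

theory Defs
  imports "HOL-Library.FuncSet"
begin

text \<open>A polynomial endofunctor  P0 <-s- P2 -p-> P1 -t-> P0, with carriers given as
  sets inside ambient types: pc0 = P0 (colours/edges), pc1 = P1 (operations),
  pc2 = P2 (inputs).\<close>

record ('e, 'o, 'i) poly =
  pc0 :: "'e set"
  pc1 :: "'o set"
  pc2 :: "'i set"
  ps  :: "'i \<Rightarrow> 'e"
  pp  :: "'i \<Rightarrow> 'o"
  pt  :: "'o \<Rightarrow> 'e"

definition fibre :: "('e, 'o, 'i, 'z) poly_scheme \<Rightarrow> 'o \<Rightarrow> 'i set" where
  "fibre P b = {x \<in> pc2 P. pp P x = b}"

definition is_poly :: "('e, 'o, 'i, 'z) poly_scheme \<Rightarrow> bool" where
  "is_poly P \<longleftrightarrow> ps P \<in> pc2 P \<rightarrow> pc0 P \<and> pp P \<in> pc2 P \<rightarrow> pc1 P \<and> pt P \<in> pc1 P \<rightarrow> pc0 P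
     \<and> (\<forall>b \<in> pc1 P. finite (fibre P b))"

text \<open>Morphisms in PolyEnd: triples of maps commuting with s, p, t whose middle square
  (P2 -> Q2 over P1 -> Q1) is a pullback.\<close>

definition poly_morphism ::
  "('e, 'o, 'i, 'z) poly_scheme \<Rightarrow> ('f, 'q, 'j, 'w) poly_scheme \<Rightarrow>
   ('e \<Rightarrow> 'f) \<Rightarrow> ('o \<Rightarrow> 'q) \<Rightarrow> ('i \<Rightarrow> 'j) \<Rightarrow> bool" where
  "poly_morphism P Q F0 F1 F2 \<longleftrightarrow>
     F0 \<in> pc0 P \<rightarrow> pc0 Q \<and> F1 \<in> pc1 P \<rightarrow> pc1 Q \<and> F2 \<in> pc2 P \<rightarrow> pc2 Q
   \<and> (\<forall>x \<in> pc2 P. ps Q (F2 x) = F0 (ps P x))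
   \<and> (\<forall>x \<in> pc2 P. pp Q (F2 x) = F1 (pp P x))
   \<and> (\<forall>b \<in> pc1 P. pt Q (F1 b) = F0 (pt P b))
   \<and> bij_betw (\<lambda>x. (pp P x, F2 x)) (pc2 P)
       {(b, y). b \<in> pc1 P \<and> y \<in> pc2 Q \<and> F1 b = pp Q y}"

text \<open>The composite P o P: operations are pairs (b, d) with d assigning to each input
  x of b an operation d x with t (d x) = s x; inputs are ((b,d), x, x') with x an input of b
  and x' an input of d x.\<close>

definition comp1 :: "('e, 'o, 'i, 'z) poly_scheme \<Rightarrow> ('o \<times> ('i \<Rightarrow> 'o)) set" where
  "comp1 P = {(b, d). b \<in> pc1 P \<and> d \<in> extensional (fibre P b)
      \<and> (\<forall>x \<in> fibre P b. d x \<in> pc1 P \<and> pt P (d x) = ps P x)}"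

definition comp2 :: "('e, 'o, 'i, 'z) poly_scheme \<Rightarrow> (('o \<times> ('i \<Rightarrow> 'o)) \<times> 'i \<times> 'i) set" where
  "comp2 P = {((b, d), x, x'). (b, d) \<in> comp1 P \<and> x \<in> fibre P b \<and> x' \<in> fibre P (d x)}"

text \<open>A polynomial endofunctor together with unit (components eta1 : P0 -> P1,
  eta2 : P0 -> P2) and multiplication (components mu1 : (PoP)_1 -> P1,
  mu2 : (PoP)_2 -> P2).\<close>

record ('e, 'o, 'i) pmonad =
  pm_poly :: "('e, 'o, 'i) poly"
  eta1 :: "'e \<Rightarrow> 'o"
  eta2 :: "'e \<Rightarrow> 'i"
  mu1 :: "'o \<times> ('i \<Rightarrow> 'o) \<Rightarrow> 'o"
  mu2 :: "('o \<times> ('i \<Rightarrow> 'o)) \<times> 'i \<times> 'i \<Rightarrow> 'i"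

text \<open>Monad morphism: a morphism of polynomial endofunctors compatible with units and
  with multiplications (the latter via the horizontal composite F o F, which sends
  (b,d) to (F1 b, d') where d' (F2 x) = F1 (d x)).\<close>

definition monad_morphism ::
  "('e, 'o, 'i) pmonad \<Rightarrow> ('f, 'q, 'j) pmonad \<Rightarrow>
   ('e \<Rightarrow> 'f) \<Rightarrow> ('o \<Rightarrow> 'q) \<Rightarrow> ('i \<Rightarrow> 'j) \<Rightarrow> bool" where
  "monad_morphism M N F0 F1 F2 \<longleftrightarrow>
     poly_morphism (pm_poly M) (pm_poly N) F0 F1 F2
   \<and> (\<forall>a \<in> pc0 (pm_poly M). F1 (eta1 M a) = eta1 N (F0 a) \<and> F2 (eta2 M a) = eta2 N (F0 a))
   \<and> (\<forall>(b, d) \<in> comp1 (pm_poly M). \<forall>d'.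
        (d' \<in> extensional (fibre (pm_poly N) (F1 b))
          \<and> (\<forall>x \<in> fibre (pm_poly M) b. d' (F2 x) = F1 (d x)))
        \<longrightarrow> F1 (mu1 M (b, d)) = mu1 N (F1 b, d')
          \<and> (\<forall>x \<in> fibre (pm_poly M) b. \<forall>x' \<in> fibre (pm_poly M) (d x).
               F2 (mu2 M ((b, d), x, x')) = mu2 N ((F1 b, d'), F2 x, F2 x')))"

definition tree_sigma :: "('e, 'o, 'i, 'z) poly_scheme \<Rightarrow> 'e \<Rightarrow> 'e" where
  "tree_sigma T a = (if a \<in> ps T ` pc2 T then pt T (pp T (the_inv_into (pc2 T) (ps T) a)) else a)"

definition is_tree :: "('e, 'o, 'i, 'z) poly_scheme \<Rightarrow> bool" where
  "is_tree T \<longleftrightarrow> is_poly T \<and> finite (pc0 T) \<and> finite (pc1 T) \<and> finite (pc2 T)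
     \<and> inj_on (pt T) (pc1 T) \<and> inj_on (ps T) (pc2 T)
     \<and> (\<exists>r. pc0 T - ps T ` pc2 T = {r}
            \<and> (\<forall>a \<in> pc0 T. \<exists>k. (tree_sigma T ^^ k) a = r))"

definition tree_root :: "('e, 'o, 'i, 'z) poly_scheme \<Rightarrow> 'e" where
  "tree_root T = (THE r. r \<in> pc0 T - ps T ` pc2 T)"

text \<open>A subtree is given by its triple of carriers (subsets of those of T), with the
  structure maps of T restricted; it must be a tree and the componentwise inclusion must be
  a morphism of polynomial endofunctors.\<close>

type_synonym ('e, 'o, 'i) subtr = "'e set \<times> 'o set \<times> 'i set"

definition subpoly :: "('e, 'o, 'i) poly \<Rightarrow> ('e, 'o, 'i) subtr \<Rightarrow> ('e, 'o, 'i) poly" where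
  "subpoly T X = T\<lparr>pc0 := fst X, pc1 := fst (snd X), pc2 := snd (snd X)\<rparr>"

definition is_subtree :: "('e, 'o, 'i) poly \<Rightarrow> ('e, 'o, 'i) subtr \<Rightarrow> bool" where
  "is_subtree T X \<longleftrightarrow> fst X \<subseteq> pc0 T \<and> fst (snd X) \<subseteq> pc1 T \<and> snd (snd X) \<subseteq> pc2 T
     \<and> is_tree (subpoly T X) \<and> poly_morphism (subpoly T X) T id id id"

definition sub :: "('e, 'o, 'i) poly \<Rightarrow> ('e, 'o, 'i) subtr set" where
  "sub T = {X. is_subtree T X}"

definition leaves :: "('e, 'o, 'i, 'z) poly_scheme \<Rightarrow> 'e set" where
  "leaves T = pc0 T - pt T ` pc1 T"

definition sub' :: "('e, 'o, 'i) poly \<Rightarrow> (('e, 'o, 'i) subtr \<times> 'e) set" where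
  "sub' T = {(X, l). X \<in> sub T \<and> l \<in> leaves (subpoly T X)}"

definition tree_bar_poly ::
  "('e, 'o, 'i) poly \<Rightarrow> ('e, ('e, 'o, 'i) subtr, ('e, 'o, 'i) subtr \<times> 'e) poly" where
  "tree_bar_poly T = \<lparr>pc0 = pc0 T, pc1 = sub T, pc2 = sub' T,
     ps = snd, pp = fst, pt = (\<lambda>X. tree_root (subpoly T X))\<rparr>"

definition trivial_subtree :: "'e \<Rightarrow> ('e, 'o, 'i) subtr" where
  "trivial_subtree a = ({a}, {}, {})"

text \<open>Grafting: the subtree X with, for each leaf l, the subtree d (X, l) (rooted at l)
  grafted onto l.\<close>

definition graft ::
  "('e, 'o, 'i) poly \<Rightarrow> ('e, 'o, 'i) subtr \<Rightarrow> (('e, 'o, 'i) subtr \<times> 'e \<Rightarrow> ('e, 'o, 'i) subtr)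
   \<Rightarrow> ('e, 'o, 'i) subtr" where
  "graft T X d =
     (fst X \<union> (\<Union>l \<in> leaves (subpoly T X). fst (d (X, l))),
      fst (snd X) \<union> (\<Union>l \<in> leaves (subpoly T X). fst (snd (d (X, l)))),
      snd (snd X) \<union> (\<Union>l \<in> leaves (subpoly T X). snd (snd (d (X, l)))))"

text \<open>The free monad on the tree T (the polynomial monad T-bar).\<close>

definition tree_bar ::
  "('e, 'o, 'i) poly \<Rightarrow> ('e, ('e, 'o, 'i) subtr, ('e, 'o, 'i) subtr \<times> 'e) pmonad" where
  "tree_bar T = \<lparr>pm_poly = tree_bar_poly T,
     eta1 = (\<lambda>a. trivial_subtree a),
     eta2 = (\<lambda>a. (trivial_subtree a, a)),
     mu1 = (\<lambda>(X, d). graft T X d),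
     mu2 = (\<lambda>((X, d), x, x'). (graft T X d, snd x'))\<rparr>"

end

theory Submission
  imports Defs
begin


lemma tree_root_eq:
  assumes "is_tree T" shows "pc0 T - ps T ` pc2 T = {tree_root T}"
proof -
  from assms obtain r where r: "pc0 T - ps T ` pc2 T = {r}" unfolding is_tree_def by blast
  hence "tree_root T = r" unfolding tree_root_def by auto
  with r show ?thesis by simp
qed

lemma tree_root_in: "is_tree T \<Longrightarrow> tree_root T \<in> pc0 T"
  using tree_root_eq[of T] by blast

lemma tree_root_notin: "is_tree T \<Longrightarrow> tree_root T \<notin> ps T ` pc2 T"
  using tree_root_eq[of T] by blast

lemma tree_nonroot: "is_tree T \<Longrightarrow> a \<in> pc0 T \<Longrightarrow> a \<noteq> tree_root T \<Longrightarrow> a \<in> ps T ` pc2 T"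
  using tree_root_eq[of T] by blast

lemma is_tree_poly: "is_tree T \<Longrightarrow> is_poly T" unfolding is_tree_def by simp

lemma tree_ps: "is_tree T \<Longrightarrow> x \<in> pc2 T \<Longrightarrow> ps T x \<in> pc0 T"
  unfolding is_tree_def is_poly_def by auto
lemma tree_pp: "is_tree T \<Longrightarrow> x \<in> pc2 T \<Longrightarrow> pp T x \<in> pc1 T"
  unfolding is_tree_def is_poly_def by auto
lemma tree_pt: "is_tree T \<Longrightarrow> v \<in> pc1 T \<Longrightarrow> pt T v \<in> pc0 T"
  unfolding is_tree_def is_poly_def by auto
lemma tree_inj_ps: "is_tree T \<Longrightarrow> inj_on (ps T) (pc2 T)"
  unfolding is_tree_def by auto
lemma tree_inj_pt: "is_tree T \<Longrightarrow> inj_on (pt T) (pc1 T)"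
  unfolding is_tree_def by auto

lemma sigma_ps: assumes t: "is_tree T" and x: "x \<in> pc2 T" shows "tree_sigma T (ps T x) = pt T (pp T x)"
  unfolding tree_sigma_def using the_inv_into_f_f[OF tree_inj_ps[OF t] x] x by auto

lemma sigma_root: "is_tree T \<Longrightarrow> tree_sigma T (tree_root T) = tree_root T"
  unfolding tree_sigma_def using tree_root_notin by auto

lemma sigma_in: "is_tree T \<Longrightarrow> a \<in> pc0 T \<Longrightarrow> tree_sigma T a \<in> pc0 T"
proof -
  assume t: "is_tree T" and a: "a \<in> pc0 T"
  show ?thesis
  proof (cases "a \<in> ps T ` pc2 T")
    case True
    then obtain x where x: "x \<in> pc2 T" "a = ps T x" by blast
    show ?thesis using sigma_ps[OF t x(1)] x tree_pt[OF t tree_pp[OF t x(1)]] by simp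
  next
    case False then show ?thesis using a unfolding tree_sigma_def by simp
  qed
qed

lemma sigma_pow_in: "is_tree T \<Longrightarrow> a \<in> pc0 T \<Longrightarrow> (tree_sigma T ^^ k) a \<in> pc0 T"
  by (induction k) (auto intro: sigma_in)

lemma sigma_pow_root: "is_tree T \<Longrightarrow> (tree_sigma T ^^ k) (tree_root T) = tree_root T"
  by (induction k) (auto simp: sigma_root)

lemma tree_reach: "is_tree T \<Longrightarrow> a \<in> pc0 T \<Longrightarrow> \<exists>k. (tree_sigma T ^^ k) a = tree_root T"
proof -
  assume t: "is_tree T" and a: "a \<in> pc0 T"
  from t obtain r where r: "pc0 T - ps T ` pc2 T = {r}" "\<forall>a \<in> pc0 T. \<exists>k. (tree_sigma T ^^ k) a = r"
    unfolding is_tree_def by blast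
  have "tree_root T = r" using tree_root_eq[OF t] r(1) by simp
  with r(2) a show ?thesis by simp
qed

definition tdist where "tdist T a = (LEAST k. (tree_sigma T ^^ k) a = tree_root T)"

lemma tdist1: "is_tree T \<Longrightarrow> a \<in> pc0 T \<Longrightarrow> (tree_sigma T ^^ tdist T a) a = tree_root T"
  unfolding tdist_def using tree_reach by (metis (mono_tags, lifting) LeastI_ex)

lemma tdist2: "(tree_sigma T ^^ k) a = tree_root T \<Longrightarrow> tdist T a \<le> k"
  unfolding tdist_def by (rule Least_le)

lemma tdist_root: "tdist T (tree_root T) = 0"
  using tdist2[of 0 T "tree_root T"] by simp

lemma tdist_Suc:
  assumes t: "is_tree T" and a: "a \<in> pc0 T" and ne: "a \<noteq> tree_root T"
  shows "tdist T a = Suc (tdist T (tree_sigma T a))"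
proof -
  have s: "tree_sigma T a \<in> pc0 T" using sigma_in[OF t a] .
  have "tdist T a \<noteq> 0" using tdist1[OF t a] ne by (metis funpow_0)
  then obtain j where j: "tdist T a = Suc j" using not0_implies_Suc by blast
  have "(tree_sigma T ^^ j) (tree_sigma T a) = tree_root T"
    using tdist1[OF t a] j by (simp add: funpow_Suc_right del: funpow.simps)
  hence le1: "tdist T (tree_sigma T a) \<le> j" by (rule tdist2)
  have "(tree_sigma T ^^ Suc (tdist T (tree_sigma T a))) a = tree_root T"
    using tdist1[OF t s] by (simp add: funpow_Suc_right del: funpow.simps)
  hence "tdist T a \<le> Suc (tdist T (tree_sigma T a))" by (rule tdist2)
  with le1 j show ?thesis by simp
qed

lemma tdist_pow:
  assumes t: "is_tree T"
  shows "a \<in> pc0 T \<Longrightarrow> k \<le> tdist T a \<Longrightarrow> tdist T ((tree_sigma T ^^ k) a) = tdist T a - k"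
proof (induction k arbitrary: a)
  case 0 then show ?case by simp
next
  case (Suc k)
  have "a \<noteq> tree_root T" using Suc.prems tdist_root by (metis not_less_eq_eq zero_le)
  hence d: "tdist T a = Suc (tdist T (tree_sigma T a))" using tdist_Suc[OF t Suc.prems(1)] by simp
  have "tdist T ((tree_sigma T ^^ k) (tree_sigma T a)) = tdist T (tree_sigma T a) - k"
    using Suc.IH[OF sigma_in[OF t Suc.prems(1)]] Suc.prems(2) d by simp
  then show ?case using d by (simp add: funpow_Suc_right del: funpow.simps)
qed

lemma tdist_reach:
  assumes t: "is_tree T" and a: "a \<in> pc0 T" and j: "(tree_sigma T ^^ j) a = b"
  shows "tdist T b \<le> tdist T a \<and> (tree_sigma T ^^ (tdist T a - tdist T b)) a = b"
proof (cases "j \<le> tdist T a")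
  case True
  then show ?thesis using tdist_pow[OF t a True] j by simp
next
  case False
  have "(tree_sigma T ^^ j) a = (tree_sigma T ^^ (j - tdist T a)) ((tree_sigma T ^^ tdist T a) a)"
  proof -
    have "j = (j - tdist T a) + tdist T a" using False by simp
    hence "(tree_sigma T ^^ j) = (tree_sigma T ^^ (j - tdist T a)) o (tree_sigma T ^^ tdist T a)"
      by (metis funpow_add)
    thus ?thesis by simp
  qed
  also have "\<dots> = tree_root T" using tdist1[OF t a] sigma_pow_root[OF t] by simp
  finally have b: "b = tree_root T" using j by simp
  then show ?thesis using tdist_root[of T] tdist1[OF t a] by simp
qed

lemma funpow_reach:
  assumes "\<forall>a\<in>A-{r}. f a = g a \<and> f a \<in> A"
  shows "a \<in> A \<Longrightarrow> (f^^k) a = r \<Longrightarrow> \<exists>j. (g^^j) a = r"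
proof (induction k arbitrary: a)
  case 0 then show ?case by (metis funpow_0)
next
  case (Suc k)
  show ?case
  proof (cases "a = r")
    case True then show ?thesis by (metis funpow_0)
  next
    case False
    have fa: "f a = g a" "f a \<in> A" using assms Suc.prems(1) False by blast+
    have "(f^^k) (f a) = r" using Suc.prems by (simp add: funpow_Suc_right del: funpow.simps)
    then obtain j where "(g^^j) (f a) = r" using Suc.IH[OF fa(2)] by blast
    hence "(g^^j) (g a) = r" using fa(1) by simp
    hence "(g^^Suc j) a = r" by (simp add: funpow_Suc_right del: funpow.simps)
    then show ?thesis by blast
  qed
qed



lemma subpoly_simps[simp]:
  "pc0 (subpoly T (A,B,C)) = A" "pc1 (subpoly T (A,B,C)) = B" "pc2 (subpoly T (A,B,C)) = C"
  "ps (subpoly T X) = ps T" "pp (subpoly T X) = pp T" "pt (subpoly T X) = pt T"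
  by (simp_all add: subpoly_def)

lemma is_subtree_iff:
  "is_subtree T (A,B,C) \<longleftrightarrow> A \<subseteq> pc0 T \<and> B \<subseteq> pc1 T \<and> C \<subseteq> pc2 T
     \<and> is_tree (subpoly T (A,B,C)) \<and> (\<forall>y\<in>pc2 T. pp T y \<in> B \<longrightarrow> y \<in> C)"
proof
  assume s: "is_subtree T (A,B,C)"
  hence bij: "bij_betw (\<lambda>x. (pp T x, x)) C {(b, y). b \<in> B \<and> y \<in> pc2 T \<and> b = pp T y}"
    unfolding is_subtree_def poly_morphism_def by simp
  have "\<forall>y\<in>pc2 T. pp T y \<in> B \<longrightarrow> y \<in> C"
  proof (intro ballI impI)
    fix y assume "y \<in> pc2 T" "pp T y \<in> B"
    hence "(pp T y, y) \<in> (\<lambda>x. (pp T x, x)) ` C" using bij_betw_imp_surj_on[OF bij] by auto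
    thus "y \<in> C" by auto
  qed
  with s show "A \<subseteq> pc0 T \<and> B \<subseteq> pc1 T \<and> C \<subseteq> pc2 T
     \<and> is_tree (subpoly T (A,B,C)) \<and> (\<forall>y\<in>pc2 T. pp T y \<in> B \<longrightarrow> y \<in> C)"
    unfolding is_subtree_def by simp
next
  assume h: "A \<subseteq> pc0 T \<and> B \<subseteq> pc1 T \<and> C \<subseteq> pc2 T
     \<and> is_tree (subpoly T (A,B,C)) \<and> (\<forall>y\<in>pc2 T. pp T y \<in> B \<longrightarrow> y \<in> C)"
  have pp: "\<And>x. x \<in> C \<Longrightarrow> pp T x \<in> B" using tree_pp[of "subpoly T (A,B,C)"] h by fastforce
  have "bij_betw (\<lambda>x. (pp T x, x)) C {(b, y). b \<in> B \<and> y \<in> pc2 T \<and> b = pp T y}"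
    unfolding bij_betw_def
  proof
    show "inj_on (\<lambda>x. (pp T x, x)) C" by (auto intro: inj_onI)
    show "(\<lambda>x. (pp T x, x)) ` C = {(b, y). b \<in> B \<and> y \<in> pc2 T \<and> b = pp T y}"
      using h pp by auto
  qed
  with h show "is_subtree T (A,B,C)" unfolding is_subtree_def poly_morphism_def by auto
qed

lemma sub_sigma:
  assumes "C \<subseteq> pc2 T" "inj_on (ps T) (pc2 T)" "a \<in> ps T ` C"
  shows "tree_sigma (subpoly T (A,B,C)) a = tree_sigma T a"
proof -
  obtain x where x: "x \<in> C" "a = ps T x" using assms(3) by blast
  have "inj_on (ps T) C" using assms(1,2) inj_on_subset by blast
  hence "the_inv_into C (ps T) a = x" using x the_inv_into_f_f by metis
  moreover have "the_inv_into (pc2 T) (ps T) a = x" using x assms(1,2) the_inv_into_f_f by (metis subsetD)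
  ultimately show ?thesis unfolding tree_sigma_def using x assms(1) by auto
qed

context
  fixes T :: "('e,'o,'i) poly" and A B C
  assumes t: "is_tree T" and s: "is_subtree T (A,B,C)"
begin

abbreviation "Z \<equiv> subpoly T (A,B,C)"

lemma sub_props: "A \<subseteq> pc0 T" "B \<subseteq> pc1 T" "C \<subseteq> pc2 T" "is_tree Z"
  "\<And>y. y \<in> pc2 T \<Longrightarrow> pp T y \<in> B \<Longrightarrow> y \<in> C"
  using s unfolding is_subtree_iff by auto

lemma sub_ps: "x \<in> C \<Longrightarrow> ps T x \<in> A" using tree_ps[OF sub_props(4)] by simp
lemma sub_pp: "x \<in> C \<Longrightarrow> pp T x \<in> B" using tree_pp[OF sub_props(4)] by simp
lemma sub_pt: "v \<in> B \<Longrightarrow> pt T v \<in> A" using tree_pt[OF sub_props(4)] by simp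
lemma sub_root: "tree_root Z \<in> A" using tree_root_in[OF sub_props(4)] by simp

lemma sub_step:
  assumes a: "a \<in> A" "a \<noteq> tree_root Z"
  shows "tree_sigma T a \<in> A \<and> tree_sigma T a \<in> pt T ` B \<and> a \<in> ps T ` C"
proof -
  have "a \<in> ps T ` C" using tree_nonroot[OF sub_props(4)] a by simp
  then obtain x where x: "x \<in> C" "a = ps T x" by blast
  have "tree_sigma T a = pt T (pp T x)" using sigma_ps[OF t] x sub_props(3) by auto
  thus ?thesis using sub_pp sub_pt x by auto
qed

lemma sub_reach:
  assumes a: "a \<in> A"
  shows "tdist T (tree_root Z) \<le> tdist T a \<and>
    (tree_sigma T ^^ (tdist T a - tdist T (tree_root Z))) a = tree_root Z"
proof -
  obtain k where k: "(tree_sigma Z ^^ k) a = tree_root Z"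
    using tree_reach[OF sub_props(4)] a by auto
  have "\<forall>b\<in>A-{tree_root Z}. tree_sigma Z b = tree_sigma T b \<and> tree_sigma Z b \<in> A"
  proof
    fix b assume b: "b \<in> A - {tree_root Z}"
    hence "b \<in> ps T ` C" using sub_step by auto
    hence "tree_sigma Z b = tree_sigma T b"
      using sub_sigma[OF sub_props(3) tree_inj_ps[OF t]] by blast
    thus "tree_sigma Z b = tree_sigma T b \<and> tree_sigma Z b \<in> A" using b sub_step by auto
  qed
  from funpow_reach[OF this a k] obtain j where "(tree_sigma T ^^ j) a = tree_root Z" by blast
  thus ?thesis using tdist_reach[OF t] a sub_props(1) by blast
qed

lemma sub_chain:
  "a \<in> A \<Longrightarrow> k \<le> tdist T a - tdist T (tree_root Z) \<Longrightarrow>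
    (tree_sigma T ^^ k) a \<in> A \<and> (0 < k \<longrightarrow> (tree_sigma T ^^ k) a \<in> pt T ` B)"
proof (induction k arbitrary: a)
  case 0 then show ?case by simp
next
  case (Suc k)
  have ne: "a \<noteq> tree_root Z" using Suc.prems by auto
  have st: "tree_sigma T a \<in> A" "tree_sigma T a \<in> pt T ` B" using sub_step[OF Suc.prems(1) ne] by auto
  have "tdist T a \<noteq> 0" using Suc.prems by auto
  hence "a \<noteq> tree_root T" using tdist_root by metis
  hence "tdist T a = Suc (tdist T (tree_sigma T a))" using tdist_Suc[OF t] Suc.prems(1) sub_props(1) by auto
  hence "k \<le> tdist T (tree_sigma T a) - tdist T (tree_root Z)" using Suc.prems(2) by simp
  from Suc.IH[OF st(1) this] st(2) show ?case
    by (cases k) (auto simp: funpow_Suc_right simp del: funpow.simps)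
qed

lemma sub_leaf:
  assumes a: "a \<in> A" and b: "b \<in> A - pt T ` B" and le: "tdist T b \<le> tdist T a"
    and r: "(tree_sigma T ^^ (tdist T a - tdist T b)) a = b"
  shows "a = b"
proof -
  have "tdist T (tree_root Z) \<le> tdist T b" using sub_reach b by auto
  hence "tdist T a - tdist T b \<le> tdist T a - tdist T (tree_root Z)" by simp
  from sub_chain[OF a this] r b have "\<not> 0 < tdist T a - tdist T b" by auto
  hence "tdist T a - tdist T b = 0" by simp
  with r show ?thesis by simp
qed

end

lemma sub_incl:
  assumes t: "is_tree T" and s1: "is_subtree T (A,B,C)" and s2: "is_subtree T (A',B',C')"
    and r: "tree_root (subpoly T (A,B,C)) = tree_root (subpoly T (A',B',C'))"
    and l: "A - pt T ` B = A' - pt T ` B'"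
  shows "A \<subseteq> A' \<and> B \<subseteq> B' \<and> C \<subseteq> C'"
proof -
  have key: "v \<in> B \<Longrightarrow> pt T v \<in> A' \<Longrightarrow> v \<in> B'" for v
  proof -
    assume v: "v \<in> B" "pt T v \<in> A'"
    have "pt T v \<notin> A' - pt T ` B'" using l v(1) by auto
    with v(2) obtain w where w: "w \<in> B'" "pt T w = pt T v" by auto
    have "w = v" using inj_onD[OF tree_inj_pt[OF t] w(2)] w(1) v(1) sub_props(2)[OF t s1] sub_props(2)[OF t s2] by auto
    with w show "v \<in> B'" by simp
  qed
  have A: "a \<in> A \<Longrightarrow> a \<in> A'" for a
  proof (induction "tdist T a" arbitrary: a rule: less_induct)
    case less
    show ?case
    proof (cases "a = tree_root (subpoly T (A,B,C))")
      case True then show ?thesis using r sub_root[OF t s2] by simp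
    next
      case False
      then obtain x where x: "x \<in> C" "a = ps T x" using tree_nonroot[OF sub_props(4)[OF t s1]] less.prems by auto
      have xT: "x \<in> pc2 T" using x sub_props(3)[OF t s1] by auto
      have sa: "tree_sigma T a = pt T (pp T x)" using sigma_ps[OF t xT] x by simp
      have "a \<noteq> tree_root T" using x xT tree_root_notin[OF t] by (metis image_eqI)
      hence "tdist T a = Suc (tdist T (tree_sigma T a))"
        using tdist_Suc[OF t] less.prems sub_props(1)[OF t s1] by auto
      hence "tree_sigma T a \<in> A'" using less.hyps sub_step[OF t s1 less.prems False] by auto
      hence "pp T x \<in> B'" using key sub_pp[OF t s1 x(1)] sa by simp
      hence "x \<in> C'" using sub_props(5)[OF t s2 xT] by simp
      thus ?thesis using x sub_ps[OF t s2] by simp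
    qed
  qed
  have B: "v \<in> B \<Longrightarrow> v \<in> B'" for v using key A sub_pt[OF t s1] by blast
  have C: "x \<in> C \<Longrightarrow> x \<in> C'" for x
    using B sub_pp[OF t s1] sub_props(5)[OF t s2] sub_props(3)[OF t s1] by blast
  show ?thesis using A B C by blast
qed

lemma sub_unique:
  assumes t: "is_tree T" and s1: "is_subtree T X" and s2: "is_subtree T Y"
    and r: "tree_root (subpoly T X) = tree_root (subpoly T Y)"
    and l: "leaves (subpoly T X) = leaves (subpoly T Y)"
  shows "X = Y"
proof -
  obtain A B C where X: "X = (A,B,C)" by (cases X) auto
  obtain A' B' C' where Y: "Y = (A',B',C')" by (cases Y) auto
  have l': "A - pt T ` B = A' - pt T ` B'" using l unfolding X Y leaves_def by simp
  show ?thesis using sub_incl[OF t s1[unfolded X] s2[unfolded Y] r[unfolded X Y] l']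
      sub_incl[OF t s2[unfolded Y] s1[unfolded X] r[unfolded X Y, symmetric] l'[symmetric]] X Y by auto
qed



lemma leaves_sub[simp]: "leaves (subpoly T (A,B,C)) = A - pt T ` B"
  by (simp add: leaves_def)

lemma trivial_sub:
  assumes t: "is_tree T" and a: "a \<in> pc0 T"
  shows "is_subtree T ({a},{},{})" "tree_root (subpoly T ({a},{},{})) = a"
    "leaves (subpoly T ({a},{},{})) = {a}"
proof -
  have tr: "is_tree (subpoly T ({a},{},{}))"
    unfolding is_tree_def is_poly_def fibre_def
    by (auto intro!: exI[of _ 0])
  show "is_subtree T ({a},{},{})" unfolding is_subtree_iff using tr a by auto
  show "tree_root (subpoly T ({a},{},{})) = a" using tree_root_eq[OF tr] by auto
  show "leaves (subpoly T ({a},{},{})) = {a}" by simp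
qed

context
  fixes T :: "('e,'o,'i) poly" and A B C and DA DB DC
  assumes t: "is_tree T" and s: "is_subtree T (A,B,C)"
    and sd: "\<And>l. l \<in> A - pt T ` B \<Longrightarrow> is_subtree T (DA l, DB l, DC l)"
    and rd: "\<And>l. l \<in> A - pt T ` B \<Longrightarrow> tree_root (subpoly T (DA l, DB l, DC l)) = l"
begin

abbreviation "LL \<equiv> A - pt T ` B"
abbreviation "GA \<equiv> A \<union> (\<Union>l\<in>LL. DA l)"
abbreviation "GB \<equiv> B \<union> (\<Union>l\<in>LL. DB l)"
abbreviation "GC \<equiv> C \<union> (\<Union>l\<in>LL. DC l)"
abbreviation "G \<equiv> subpoly T (GA, GB, GC)"

lemma gI: assumes l: "l \<in> LL" and e: "e \<in> A" "e \<in> DA l" shows "e = l"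
proof -
  have "tdist T l \<le> tdist T e \<and> (tree_sigma T ^^ (tdist T e - tdist T l)) e = l"
    using sub_reach[OF t sd[OF l] e(2)] rd[OF l] by simp
  thus ?thesis using sub_leaf[OF t s e(1) l] by blast
qed

lemma gJ0: assumes l: "l \<in> LL" and l': "l' \<in> LL" and e: "e \<in> DA l" "e \<in> DA l'"
  and le: "tdist T l \<le> tdist T l'" shows "l = l'"
proof -
  have r1: "tdist T l \<le> tdist T e" "(tree_sigma T ^^ (tdist T e - tdist T l)) e = l"
    using sub_reach[OF t sd[OF l] e(1)] rd[OF l] by simp_all
  have r2: "tdist T l' \<le> tdist T e" "(tree_sigma T ^^ (tdist T e - tdist T l')) e = l'"
    using sub_reach[OF t sd[OF l'] e(2)] rd[OF l'] by simp_all
  have "tdist T e - tdist T l = (tdist T l' - tdist T l) + (tdist T e - tdist T l')"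
    using r1 r2 le by simp
  hence "(tree_sigma T ^^ (tdist T e - tdist T l)) e
      = (tree_sigma T ^^ (tdist T l' - tdist T l)) ((tree_sigma T ^^ (tdist T e - tdist T l')) e)"
    by (simp add: funpow_add)
  hence "(tree_sigma T ^^ (tdist T l' - tdist T l)) l' = l" using r1 r2 by simp
  thus ?thesis using sub_leaf[OF t s _ l le] l' by auto
qed

lemma gJ: assumes l: "l \<in> LL" and l': "l' \<in> LL" and e: "e \<in> DA l" "e \<in> DA l'" shows "l = l'"
  using gJ0[OF l l' e] gJ0[OF l' l e(2) e(1)] by (metis nat_le_linear)

lemma g_sub: "GA \<subseteq> pc0 T" "GB \<subseteq> pc1 T" "GC \<subseteq> pc2 T"
  using sub_props(1-3)[OF t s] sub_props(1-3)[OF t sd] by blast+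

lemma g_ps: "x \<in> GC \<Longrightarrow> ps T x \<in> GA"
  using sub_ps[OF t s] sub_ps[OF t sd] by blast
lemma g_pp: "x \<in> GC \<Longrightarrow> pp T x \<in> GB"
  using sub_pp[OF t s] sub_pp[OF t sd] by blast
lemma g_pt: "v \<in> GB \<Longrightarrow> pt T v \<in> GA"
  using sub_pt[OF t s] sub_pt[OF t sd] by blast

lemma g_rootset: "GA - ps T ` GC = {tree_root (subpoly T (A,B,C))}"
proof
  let ?r = "tree_root (subpoly T (A,B,C))"
  show "GA - ps T ` GC \<subseteq> {?r}"
  proof
    fix e assume e: "e \<in> GA - ps T ` GC"
    show "e \<in> {?r}"
    proof (cases "e \<in> A")
      case True
      then show ?thesis using e tree_nonroot[OF sub_props(4)[OF t s]] by auto
    next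
      case False
      then obtain l where l: "l \<in> LL" "e \<in> DA l" using e by auto
      have "e = l" using tree_nonroot[OF sub_props(4)[OF t sd[OF l(1)]]] rd[OF l(1)] l e by auto
      then show ?thesis using False l by auto
    qed
  qed
  have "?r \<notin> ps T ` GC"
  proof
    assume "?r \<in> ps T ` GC"
    then obtain y where y: "y \<in> GC" "?r = ps T y" by blast
    show False
    proof (cases "y \<in> C")
      case True then show False using y tree_root_notin[OF sub_props(4)[OF t s]] by auto
    next
      case False
      then obtain l where l: "l \<in> LL" "y \<in> DC l" using y by auto
      have "?r \<in> DA l" using sub_ps[OF t sd[OF l(1)] l(2)] y by simp
      hence "?r = l" using gI[OF l(1) sub_root[OF t s]] by simp
      thus False using tree_root_notin[OF sub_props(4)[OF t sd[OF l(1)]]] rd[OF l(1)] l y by auto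
    qed
  qed
  thus "{?r} \<subseteq> GA - ps T ` GC" using sub_root[OF t s] by auto
qed

lemma g_tree: "is_tree G"
proof -
  let ?r = "tree_root (subpoly T (A,B,C))"
  have fin: "finite GA" "finite GB" "finite GC"
    using g_sub t unfolding is_tree_def by (meson finite_subset)+
  have ff: "\<And>b. finite {x \<in> GC. pp T x = b}" by (rule finite_subset[OF _ fin(3)]) auto
  have poly: "is_poly G" unfolding is_poly_def fibre_def
  proof (intro conjI ballI)
    show "ps G \<in> pc2 G \<rightarrow> pc0 G"
    proof (rule funcsetI)
      fix x assume "x \<in> pc2 G" thus "ps G x \<in> pc0 G" using g_ps[of x] by simp
    qed
    show "pp G \<in> pc2 G \<rightarrow> pc1 G"
    proof (rule funcsetI)
      fix x assume "x \<in> pc2 G" thus "pp G x \<in> pc1 G" using g_pp[of x] by simp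
    qed
    show "pt G \<in> pc1 G \<rightarrow> pc0 G"
    proof (rule funcsetI)
      fix x assume "x \<in> pc1 G" thus "pt G x \<in> pc0 G" using g_pt[of x] by simp
    qed
    show "finite {x \<in> pc2 G. pp G x = b}" for b using ff[of b] by simp
  qed
  have inj: "inj_on (pt T) GB" "inj_on (ps T) GC"
    using inj_on_subset[OF tree_inj_pt[OF t] g_sub(2)] inj_on_subset[OF tree_inj_ps[OF t] g_sub(3)] .
  have sg: "\<And>b. b \<in> ps T ` GC \<Longrightarrow> tree_sigma G b = tree_sigma T b"
    by (rule sub_sigma[OF g_sub(3) tree_inj_ps[OF t]])
  have reachA: "\<exists>k. (tree_sigma G ^^ k) a = ?r" if a: "a \<in> A" for a
  proof -
    have h: "\<forall>b\<in>A-{?r}. tree_sigma T b = tree_sigma G b \<and> tree_sigma T b \<in> A"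
    proof
      fix b assume b: "b \<in> A-{?r}"
      have st: "tree_sigma T b \<in> A" "b \<in> ps T ` C" using sub_step[OF t s, of b] b by auto
      have "b \<in> ps T ` GC" using st(2) by blast
      thus "tree_sigma T b = tree_sigma G b \<and> tree_sigma T b \<in> A" using sg st(1) by simp
    qed
    obtain k where "(tree_sigma T ^^ k) a = ?r" using sub_reach[OF t s a] by blast
    thus ?thesis using funpow_reach[OF h a] by blast
  qed
  have reach: "\<exists>k. (tree_sigma G ^^ k) a = ?r" if a: "a \<in> GA" for a
  proof (cases "a \<in> A")
    case True then show ?thesis using reachA by blast
  next
    case False
    then obtain l where l: "l \<in> LL" "a \<in> DA l" using a by blast
    have h: "\<forall>b\<in>DA l-{l}. tree_sigma T b = tree_sigma G b \<and> tree_sigma T b \<in> DA l"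
    proof
      fix b assume b: "b \<in> DA l-{l}"
      have st: "tree_sigma T b \<in> DA l" "b \<in> ps T ` DC l"
        using sub_step[OF t sd[OF l(1)], of b] b rd[OF l(1)] by auto
      have "b \<in> ps T ` GC" using st(2) l(1) by blast
      thus "tree_sigma T b = tree_sigma G b \<and> tree_sigma T b \<in> DA l" using sg st(1) by simp
    qed
    obtain i where "(tree_sigma T ^^ i) a = l"
      using sub_reach[OF t sd[OF l(1)] l(2)] rd[OF l(1)] by auto
    then obtain j where j: "(tree_sigma G ^^ j) a = l"
      using funpow_reach[OF h l(2)] by blast
    obtain k where k: "(tree_sigma G ^^ k) l = ?r" using reachA l(1) by blast
    have "(tree_sigma G ^^ (k + j)) a = ?r" using j k by (simp add: funpow_add)
    thus ?thesis by blast
  qed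
  show ?thesis unfolding is_tree_def
  proof (intro conjI exI[of _ ?r])
    show "\<forall>a\<in>pc0 G. \<exists>k. (tree_sigma G ^^ k) a = ?r" using reach by simp
  qed (use fin poly inj g_rootset in simp_all)
qed

lemma g_subtree: "is_subtree T (GA, GB, GC)"
  unfolding is_subtree_iff
proof (intro conjI ballI impI)
  show "GA \<subseteq> pc0 T" "GB \<subseteq> pc1 T" "GC \<subseteq> pc2 T" by (rule g_sub)+
  show "is_tree G" by (rule g_tree)
  fix y assume y: "y \<in> pc2 T" "pp T y \<in> GB"
  show "y \<in> GC"
  proof (cases "pp T y \<in> B")
    case True then show ?thesis using sub_props(5)[OF t s y(1)] by blast
  next
    case False
    then obtain l where l: "l \<in> LL" "pp T y \<in> DB l" using y(2) by blast
    show ?thesis using sub_props(5)[OF t sd[OF l(1)] y(1) l(2)] l(1) by blast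
  qed
qed

lemma g_root: "tree_root G = tree_root (subpoly T (A,B,C))"
  using tree_root_eq[OF g_tree] g_rootset by simp

lemma g_leaves: "leaves G = (\<Union>l\<in>LL. leaves (subpoly T (DA l, DB l, DC l)))"
proof -
  have "GA - pt T ` GB = (\<Union>l\<in>LL. DA l - pt T ` DB l)"
  proof
    show "GA - pt T ` GB \<subseteq> (\<Union>l\<in>LL. DA l - pt T ` DB l)"
    proof
      fix e assume e: "e \<in> GA - pt T ` GB"
      show "e \<in> (\<Union>l\<in>LL. DA l - pt T ` DB l)"
      proof (cases "e \<in> A")
        case True
        hence l: "e \<in> LL" using e by auto
        have "e \<in> DA e" using sub_root[OF t sd[OF l]] rd[OF l] by simp
        thus ?thesis using l e by auto
      next
        case False then show ?thesis using e by auto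
      qed
    qed
    show "(\<Union>l\<in>LL. DA l - pt T ` DB l) \<subseteq> GA - pt T ` GB"
    proof
      fix e assume "e \<in> (\<Union>l\<in>LL. DA l - pt T ` DB l)"
      then obtain l where l: "l \<in> LL" "e \<in> DA l" "e \<notin> pt T ` DB l" by auto
      have n1: "e \<notin> pt T ` B"
      proof
        assume "e \<in> pt T ` B"
        then obtain v where v: "v \<in> B" "e = pt T v" by blast
        hence "e \<in> A" using sub_pt[OF t s] by simp
        hence "e = l" using gI[OF l(1) _ l(2)] by simp
        thus False using l(1) v by auto
      qed
      have n2: "e \<notin> pt T ` DB l'" if l': "l' \<in> LL" for l'
      proof
        assume "e \<in> pt T ` DB l'"
        then obtain v where v: "v \<in> DB l'" "e = pt T v" by blast
        hence "e \<in> DA l'" using sub_pt[OF t sd[OF l']] by simp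
        hence "l = l'" using gJ[OF l(1) l' l(2)] by simp
        thus False using l v by auto
      qed
      show "e \<in> GA - pt T ` GB" using n1 n2 l by blast
    qed
  qed
  thus ?thesis unfolding leaves_sub by (rule trans) (rule SUP_cong, simp_all)
qed

end



lemma graft_props:
  assumes t: "is_tree T" and s: "is_subtree T X"
    and dd: "\<And>l. l \<in> leaves (subpoly T X) \<Longrightarrow> is_subtree T (d (X,l)) \<and> tree_root (subpoly T (d (X,l))) = l"
  shows "is_subtree T (graft T X d) \<and> tree_root (subpoly T (graft T X d)) = tree_root (subpoly T X)
    \<and> leaves (subpoly T (graft T X d)) = (\<Union>l\<in>leaves (subpoly T X). leaves (subpoly T (d (X,l))))"
proof -
  obtain A B C where X: "X = (A,B,C)" by (cases X) auto
  let ?DA = "\<lambda>l. fst (d (X,l))" and ?DB = "\<lambda>l. fst (snd (d (X,l)))" and ?DC = "\<lambda>l. snd (snd (d (X,l)))"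
  have eq: "(?DA l, ?DB l, ?DC l) = d (X,l)" for l by simp
  have s': "is_subtree T (A,B,C)" using s X by simp
  have sd: "\<And>l. l \<in> A - pt T ` B \<Longrightarrow> is_subtree T (?DA l, ?DB l, ?DC l)"
    using dd X eq by simp
  have rd: "\<And>l. l \<in> A - pt T ` B \<Longrightarrow> tree_root (subpoly T (?DA l, ?DB l, ?DC l)) = l"
    using dd X eq by simp
  have g: "graft T X d = (A \<union> (\<Union>l\<in>A - pt T ` B. ?DA l), B \<union> (\<Union>l\<in>A - pt T ` B. ?DB l),
      C \<union> (\<Union>l\<in>A - pt T ` B. ?DC l))"
    unfolding graft_def X by simp
  show ?thesis
    unfolding g using g_subtree[OF t s' sd rd] g_root[OF t s' sd rd] g_leaves[OF t s' sd rd] X eq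
    by simp
qed

lemma sub'_iff: "(X, l) \<in> sub' T \<longleftrightarrow> is_subtree T X \<and> l \<in> leaves (subpoly T X)"
  unfolding sub'_def sub_def by simp

theorem mainTheorem11:
  fixes S :: "('e, 'o, 'i) poly" and T :: "('f, 'q, 'j) poly"
    and F0 :: "'e \<Rightarrow> 'f"
    and F1 :: "('e, 'o, 'i) subtr \<Rightarrow> ('f, 'q, 'j) subtr"
    and F2 :: "('e, 'o, 'i) subtr \<times> 'e \<Rightarrow> ('f, 'q, 'j) subtr \<times> 'f"
  assumes "is_tree S" and "is_tree T"
    and "poly_morphism (tree_bar_poly S) (tree_bar_poly T) F0 F1 F2"
  shows "monad_morphism (tree_bar S) (tree_bar T) F0 F1 F2"
proof -
  note tS = assms(1) and tT = assms(2) and pm = assms(3)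
  have M0: "\<And>a. a \<in> pc0 S \<Longrightarrow> F0 a \<in> pc0 T"
    using pm unfolding poly_morphism_def tree_bar_poly_def by auto
  have M1: "\<And>X. is_subtree S X \<Longrightarrow> is_subtree T (F1 X)"
    using pm unfolding poly_morphism_def tree_bar_poly_def sub_def by auto
  have M2: "\<And>x. x \<in> sub' S \<Longrightarrow> F2 x \<in> sub' T"
    using pm unfolding poly_morphism_def tree_bar_poly_def by auto
  have Ms: "\<And>x. x \<in> sub' S \<Longrightarrow> snd (F2 x) = F0 (snd x)"
    using pm unfolding poly_morphism_def tree_bar_poly_def by auto
  have Mp: "\<And>x. x \<in> sub' S \<Longrightarrow> fst (F2 x) = F1 (fst x)"
    using pm unfolding poly_morphism_def tree_bar_poly_def by auto
  have Mt: "\<And>X. is_subtree S X \<Longrightarrow> tree_root (subpoly T (F1 X)) = F0 (tree_root (subpoly S X))"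
    using pm unfolding poly_morphism_def tree_bar_poly_def sub_def by auto
  have Mb: "bij_betw (\<lambda>x. (fst x, F2 x)) (sub' S) {(b,y). b \<in> sub S \<and> y \<in> sub' T \<and> F1 b = fst y}"
    using pm unfolding poly_morphism_def tree_bar_poly_def by simp
  have F2eq: "\<And>X l. (X,l) \<in> sub' S \<Longrightarrow> F2 (X,l) = (F1 X, F0 l)"
    using Ms Mp by (metis fst_conv prod.collapse snd_conv)
  have lv: "leaves (subpoly T (F1 X)) = F0 ` leaves (subpoly S X)" if X: "is_subtree S X" for X
  proof
    show "F0 ` leaves (subpoly S X) \<subseteq> leaves (subpoly T (F1 X))"
    proof
      fix l' assume "l' \<in> F0 ` leaves (subpoly S X)"
      then obtain l where l: "l \<in> leaves (subpoly S X)" "l' = F0 l" by blast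
      hence "(X,l) \<in> sub' S" using X by (simp add: sub'_iff)
      hence "(F1 X, F0 l) \<in> sub' T" using M2[of "(X,l)"] F2eq[of X l] by simp
      thus "l' \<in> leaves (subpoly T (F1 X))" using l(2) by (simp add: sub'_iff)
    qed
    show "leaves (subpoly T (F1 X)) \<subseteq> F0 ` leaves (subpoly S X)"
    proof
      fix l' assume l': "l' \<in> leaves (subpoly T (F1 X))"
      hence "(F1 X, l') \<in> sub' T" using M1[OF X] by (simp add: sub'_iff)
      hence "(X, (F1 X, l')) \<in> (\<lambda>x. (fst x, F2 x)) ` sub' S"
        using bij_betw_imp_surj_on[OF Mb] X unfolding sub_def by auto
      then obtain x where x: "x \<in> sub' S" "fst x = X" "F2 x = (F1 X, l')" by auto
      obtain l where xl: "x = (X, l)" using x(2) by (cases x) auto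
      have "l \<in> leaves (subpoly S X)" using x(1) xl by (simp add: sub'_iff)
      moreover have "l' = F0 l" using F2eq[of X l] x(1,3) xl by simp
      ultimately show "l' \<in> F0 ` leaves (subpoly S X)" by blast
    qed
  qed
  have unit: "F1 (trivial_subtree a) = trivial_subtree (F0 a)" if a: "a \<in> pc0 S" for a
  proof -
    note ts = trivial_sub[OF tS a] and tt = trivial_sub[OF tT M0[OF a]]
    show ?thesis unfolding trivial_subtree_def
      using sub_unique[OF tT M1[OF ts(1)] tt(1)] Mt[OF ts(1)] ts(2,3) tt(2,3) lv[OF ts(1)] by simp
  qed
  have unit2: "F2 (trivial_subtree a, a) = (trivial_subtree (F0 a), F0 a)" if a: "a \<in> pc0 S" for a
  proof -
    have "(trivial_subtree a, a) \<in> sub' S" using trivial_sub[OF tS a]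
      unfolding trivial_subtree_def by (simp add: sub'_iff)
    thus ?thesis using F2eq unit[OF a] by simp
  qed
  have mult: "F1 (graft S b d) = graft T (F1 b) d' \<and>
      (\<forall>x\<in>fibre (tree_bar_poly S) b. \<forall>x'\<in>fibre (tree_bar_poly S) (d x).
        F2 (graft S b d, snd x') = (graft T (F1 b) d', snd (F2 x')))"
    if bd: "(b, d) \<in> comp1 (tree_bar_poly S)"
      and d': "\<forall>x\<in>fibre (tree_bar_poly S) b. d' (F2 x) = F1 (d x)" for b d d'
  proof -
    have fib: "\<And>X. fibre (tree_bar_poly S) X = {x \<in> sub' S. fst x = X}"
      unfolding fibre_def tree_bar_poly_def by simp
    have b: "is_subtree S b" using bd unfolding comp1_def tree_bar_poly_def sub_def by simp
    have dl: "is_subtree S (d (b,l)) \<and> tree_root (subpoly S (d (b,l))) = l"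
      if l: "l \<in> leaves (subpoly S b)" for l
    proof -
      have "(b,l) \<in> fibre (tree_bar_poly S) b" using fib b l by (simp add: sub'_iff)
      thus ?thesis using bd unfolding comp1_def tree_bar_poly_def sub_def by auto
    qed
    have gS: "is_subtree S (graft S b d) \<and> tree_root (subpoly S (graft S b d)) = tree_root (subpoly S b)
      \<and> leaves (subpoly S (graft S b d)) = (\<Union>l\<in>leaves (subpoly S b). leaves (subpoly S (d (b,l))))"
      using graft_props[OF tS b dl] by blast
    have d'l: "d' (F1 b, F0 l) = F1 (d (b,l))" if l: "l \<in> leaves (subpoly S b)" for l
    proof -
      have "(b,l) \<in> fibre (tree_bar_poly S) b" using fib b l by (simp add: sub'_iff)
      moreover have "(b,l) \<in> sub' S" using b l by (simp add: sub'_iff)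
      ultimately have "d' (F2 (b,l)) = F1 (d (b,l))" "F2 (b,l) = (F1 b, F0 l)" using d' F2eq[of b l] by blast+
      thus ?thesis by simp
    qed
    have dT: "is_subtree T (d' (F1 b, l')) \<and> tree_root (subpoly T (d' (F1 b, l'))) = l'"
      if l': "l' \<in> leaves (subpoly T (F1 b))" for l'
    proof -
      obtain l where l: "l \<in> leaves (subpoly S b)" "l' = F0 l" using l' lv[OF b] by blast
      show ?thesis using d'l[OF l(1)] M1 Mt dl[OF l(1)] l(2) by simp
    qed
    have gT: "is_subtree T (graft T (F1 b) d') \<and> tree_root (subpoly T (graft T (F1 b) d')) = tree_root (subpoly T (F1 b))
      \<and> leaves (subpoly T (graft T (F1 b) d')) = (\<Union>l'\<in>leaves (subpoly T (F1 b)). leaves (subpoly T (d' (F1 b,l'))))"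
      using graft_props[OF tT M1[OF b] dT] by blast
    have root_eq: "tree_root (subpoly T (F1 (graft S b d))) = tree_root (subpoly T (graft T (F1 b) d'))"
      using Mt gS gT Mt[OF b] by simp
    have "leaves (subpoly T (graft T (F1 b) d')) = (\<Union>l\<in>leaves (subpoly S b). leaves (subpoly T (d' (F1 b, F0 l))))"
      using gT lv[OF b] by simp
    also have "\<dots> = (\<Union>l\<in>leaves (subpoly S b). F0 ` leaves (subpoly S (d (b,l))))"
      using d'l lv dl by simp
    also have "\<dots> = F0 ` leaves (subpoly S (graft S b d))" using gS by (simp add: image_UN)
    also have "\<dots> = leaves (subpoly T (F1 (graft S b d)))" using lv gS by simp
    finally have leaves_eq: "leaves (subpoly T (F1 (graft S b d))) = leaves (subpoly T (graft T (F1 b) d'))" by simp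
    have G1: "F1 (graft S b d) = graft T (F1 b) d'"
      using sub_unique[OF tT M1 _ root_eq leaves_eq] gS gT by blast
    have G2: "F2 (graft S b d, snd x') = (graft T (F1 b) d', snd (F2 x'))"
      if x: "x\<in>fibre (tree_bar_poly S) b" and x': "x'\<in>fibre (tree_bar_poly S) (d x)" for x x'
    proof -
      have x1: "x \<in> sub' S" "fst x = b" using x fib by auto
      obtain l where xl0: "x = (b,l)" using x1(2) by (cases x) auto
      have xl: "x = (b,l)" "l \<in> leaves (subpoly S b)" using xl0 x1(1) by (simp_all add: sub'_iff)
      have x2: "x' \<in> sub' S" "fst x' = d x" using x' fib by auto
      obtain l'' where xl0': "x' = (d x, l'')" using x2(2) by (cases x') auto
      have xl': "x' = (d x, l'')" "l'' \<in> leaves (subpoly S (d x))" "x' \<in> sub' S"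
        using xl0' x2(1) by (simp_all add: sub'_iff)
      have "l'' \<in> leaves (subpoly S (graft S b d))" using gS xl xl' by auto
      hence "(graft S b d, l'') \<in> sub' S" using gS by (simp add: sub'_iff)
      hence "F2 (graft S b d, l'') = (F1 (graft S b d), F0 l'')" by (rule F2eq)
      moreover have "snd (F2 x') = F0 l''" using Ms[OF xl'(3)] xl'(1) by simp
      ultimately show ?thesis using G1 xl'(1) by simp
    qed
    show ?thesis using G1 G2 by blast
  qed
  show ?thesis unfolding monad_morphism_def
  proof (intro conjI)
    show "poly_morphism (pm_poly (tree_bar S)) (pm_poly (tree_bar T)) F0 F1 F2"
      using pm unfolding tree_bar_def by simp
    show "\<forall>a\<in>pc0 (pm_poly (tree_bar S)).
       F1 (eta1 (tree_bar S) a) = eta1 (tree_bar T) (F0 a) \<and>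
       F2 (eta2 (tree_bar S) a) = eta2 (tree_bar T) (F0 a)"
      using unit unit2 unfolding tree_bar_def tree_bar_poly_def by simp
    show "\<forall>(b, d)\<in>comp1 (pm_poly (tree_bar S)). \<forall>d'.
       d' \<in> extensional (fibre (pm_poly (tree_bar T)) (F1 b)) \<and>
       (\<forall>x\<in>fibre (pm_poly (tree_bar S)) b. d' (F2 x) = F1 (d x)) \<longrightarrow>
       F1 (mu1 (tree_bar S) (b, d)) = mu1 (tree_bar T) (F1 b, d') \<and>
       (\<forall>x\<in>fibre (pm_poly (tree_bar S)) b.
           \<forall>x'\<in>fibre (pm_poly (tree_bar S)) (d x).
              F2 (mu2 (tree_bar S) ((b, d), x, x')) =
              mu2 (tree_bar T) ((F1 b, d'), F2 x, F2 x'))"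
    proof (rule ballI)
      fix p assume p: "p \<in> comp1 (pm_poly (tree_bar S))"
      obtain b d where pbd: "p = (b,d)" by (cases p) auto
      have bd: "(b,d) \<in> comp1 (tree_bar_poly S)" using p pbd unfolding tree_bar_def by simp
      show "case p of (b, d) \<Rightarrow> \<forall>d'.
       d' \<in> extensional (fibre (pm_poly (tree_bar T)) (F1 b)) \<and>
       (\<forall>x\<in>fibre (pm_poly (tree_bar S)) b. d' (F2 x) = F1 (d x)) \<longrightarrow>
       F1 (mu1 (tree_bar S) (b, d)) = mu1 (tree_bar T) (F1 b, d') \<and>
       (\<forall>x\<in>fibre (pm_poly (tree_bar S)) b.
           \<forall>x'\<in>fibre (pm_poly (tree_bar S)) (d x).
              F2 (mu2 (tree_bar S) ((b, d), x, x')) =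
              mu2 (tree_bar T) ((F1 b, d'), F2 x, F2 x'))"
        unfolding pbd prod.case
      proof (intro allI impI)
        fix d' assume h: "d' \<in> extensional (fibre (pm_poly (tree_bar T)) (F1 b)) \<and>
          (\<forall>x\<in>fibre (pm_poly (tree_bar S)) b. d' (F2 x) = F1 (d x))"
        have h2: "\<forall>x\<in>fibre (tree_bar_poly S) b. d' (F2 x) = F1 (d x)"
          using h unfolding tree_bar_def by simp
        note m = mult[OF bd h2]
        show "F1 (mu1 (tree_bar S) (b, d)) = mu1 (tree_bar T) (F1 b, d') \<and>
          (\<forall>x\<in>fibre (pm_poly (tree_bar S)) b.
           \<forall>x'\<in>fibre (pm_poly (tree_bar S)) (d x).
              F2 (mu2 (tree_bar S) ((b, d), x, x')) =
              mu2 (tree_bar T) ((F1 b, d'), F2 x, F2 x'))"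
          unfolding tree_bar_def using m by simp
      qed
    qed
  qed
qed

end
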